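(* Let $\tau_a$ and $\tau_b$ be the endomorphisms of $\{a,b\}^*$ defined by $\tau_a(a)=a$, $\tau_a(b)=ab$ and $\tau_b(a)=ba$, $\tau_b(b)=b$. If $\mathbf{w}$ is an infinite LSP word over $\{a,b\}$ and $f\in\{\tau_a,\tau_b\}$, then $f(\mathbf{w})$ is LSP. Consequently, an infinite word over $\{a,b\}$ is LSP if and only if it is $\{\tau_a,\tau_b\}$-adic.
   Context: A finite word $u$ is a left special factor of a word $w$ if there are distinct letters $x\neq y$ with $xu$ and $yu$ factors of $w$. A word is LSP if every left special factor of it is a prefix of it. For a set $S$ of morphisms, an infinite word $\mathbf{w}$ is $S$-adic if there exist $(f_n)_{n\ge1}$ in $S$ and infinite words $(\mathbf{w}_n)_{n\ge1}$ with $\mathbf{w}_1=\mathbf{w}$ and $\mathbf{w}_n=f_n(\mathbf{w}_{n+1})$ for all $n\ge1$. *)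

theory Defs
  imports Main
begin

datatype ab = A | B

type_synonym 'a infword = "nat \<Rightarrow> 'a"

definition morph_list :: "('a \<Rightarrow> 'b list) \<Rightarrow> 'a list \<Rightarrow> 'b list" where
  "morph_list f u = concat (map f u)"

text \<open>This is the correct image whenever f is non-erasing (all images nonempty),
 which is the case for the morphisms considered here.\<close>
definition morph_inf :: "('a \<Rightarrow> 'b list) \<Rightarrow> 'a infword \<Rightarrow> 'b infword" where
  "morph_inf f w k = morph_list f (map w [0..<Suc k]) ! k"

definition factor :: "'a list \<Rightarrow> 'a infword \<Rightarrow> bool" where
  "factor u w \<longleftrightarrow> (\<exists>i. u = map w [i..<i + length u])"

definition prefix_inf :: "'a list \<Rightarrow> 'a infword \<Rightarrow> bool" where
  "prefix_inf u w \<longleftrightarrow> u = map w [0..<length u]"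

definition left_special :: "'a list \<Rightarrow> 'a infword \<Rightarrow> bool" where
  "left_special u w \<longleftrightarrow> (\<exists>x y. x \<noteq> y \<and> factor (x # u) w \<and> factor (y # u) w)"

definition LSP :: "'a infword \<Rightarrow> bool" where
  "LSP w \<longleftrightarrow> (\<forall>u. left_special u w \<longrightarrow> prefix_inf u w)"

definition S_adic :: "('a \<Rightarrow> 'a list) set \<Rightarrow> 'a infword \<Rightarrow> bool" where
  "S_adic S w \<longleftrightarrow> (\<exists>(fs :: nat \<Rightarrow> ('a \<Rightarrow> 'a list)) (ws :: nat \<Rightarrow> 'a infword).
      (\<forall>n\<ge>1. fs n \<in> S) \<and> ws 1 = w \<and> (\<forall>n\<ge>1. ws n = morph_inf (fs n) (ws (Suc n))))"

definition tau_a :: "ab \<Rightarrow> ab list" where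
  "tau_a c = (case c of A \<Rightarrow> [A] | B \<Rightarrow> [A, B])"

definition tau_b :: "ab \<Rightarrow> ab list" where
  "tau_b c = (case c of A \<Rightarrow> [B, A] | B \<Rightarrow> [B])"

end

theory Submission
  imports Defs
begin


declare upt_Suc[simp del]

definition shft :: "'a infword \<Rightarrow> nat \<Rightarrow> 'a infword" where
  "shft w n = (\<lambda>k. w (n + k))"

lemma shft_apply[simp]: "shft w n k = w (n + k)"
  by (simp add: shft_def)

lemma shft_shft[simp]: "shft (shft w i) j = shft w (i + j)"
  unfolding shft_def by (rule ext) (simp add: add.assoc)

lemma prefix_inf_nth: "prefix_inf u w \<longleftrightarrow> (\<forall>k<length u. u ! k = w k)"
  unfolding prefix_inf_def list_eq_iff_nth_eq by auto

lemma factor_shft: "factor u w \<longleftrightarrow> (\<exists>i. prefix_inf u (shft w i))"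
  unfolding factor_def prefix_inf_nth list_eq_iff_nth_eq by auto

lemma prefix_Nil[simp]: "prefix_inf [] w" by (simp add: prefix_inf_def)

lemma prefix_Cons: "prefix_inf (c # v) w \<longleftrightarrow> w 0 = c \<and> prefix_inf v (shft w 1)"
  unfolding prefix_inf_nth
proof
  assume H: "\<forall>k<length (c # v). (c # v) ! k = w k"
  have "w 0 = c" using H[rule_format, of 0] by simp
  moreover have "\<forall>k<length v. v ! k = shft w 1 k"
  proof (intro allI impI)
    fix k assume k: "k < length v"
    show "v ! k = shft w 1 k" using H[rule_format, of "Suc k"] k by simp
  qed
  ultimately show "w 0 = c \<and> (\<forall>k<length v. v ! k = shft w 1 k)" by blast
next
  assume H: "w 0 = c \<and> (\<forall>k<length v. v ! k = shft w 1 k)"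
  show "\<forall>k<length (c # v). (c # v) ! k = w k"
  proof (intro allI impI)
    fix k assume k: "k < length (c # v)"
    show "(c # v) ! k = w k"
    proof (cases k)
      case 0 thus ?thesis using H by simp
    next
      case (Suc j) thus ?thesis using H k by simp
    qed
  qed
qed

lemma prefix_append: "prefix_inf (xs @ ys) w \<longleftrightarrow> prefix_inf xs w \<and> prefix_inf ys (shft w (length xs))"
  unfolding prefix_inf_nth
proof (intro iffI conjI allI impI)
  fix k assume H: "\<forall>k<length (xs @ ys). (xs @ ys) ! k = w k"
  { assume k: "k < length xs"
    show "xs ! k = w k" using H[rule_format, of k] k by (simp add: nth_append) }
  { assume k: "k < length ys"
    show "ys ! k = shft w (length xs) k" using H[rule_format, of "length xs + k"] k by (simp add: nth_append) }
next
  fix k assume H: "(\<forall>k<length xs. xs ! k = w k) \<and> (\<forall>k<length ys. ys ! k = shft w (length xs) k)"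
    and k: "k < length (xs @ ys)"
  show "(xs @ ys) ! k = w k"
  proof (cases "k < length xs")
    case True then show ?thesis using H by (simp add: nth_append)
  next
    case False
    then obtain j where j: "k = length xs + j" by (metis le_add_diff_inverse not_less)
    have "j < length ys" using k j by simp
    then have "ys ! j = w (length xs + j)" using H by simp
    then show ?thesis using j by (simp add: nth_append)
  qed
qed

lemma factor_Cons: "factor (c # u) w \<longleftrightarrow> (\<exists>i. w i = c \<and> prefix_inf u (shft w (Suc i)))"
  unfolding factor_shft prefix_Cons by simp

lemma LS_iff: "left_special u w \<longleftrightarrow> factor (A # u) w \<and> factor (B # u) w"
  unfolding left_special_def
  apply (rule iffI)
   apply (elim exE conjE)
  subgoal for x y by (cases x; cases y) auto
  apply blast
  done

lemma ml_append[simp]: "morph_list f (xs @ ys) = morph_list f xs @ morph_list f ys"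
  by (simp add: morph_list_def)
lemma ml_Nil[simp]: "morph_list f [] = []" by (simp add: morph_list_def)
lemma ml_Cons[simp]: "morph_list f (x # xs) = f x @ morph_list f xs" by (simp add: morph_list_def)

definition nonerasing :: "('a \<Rightarrow> 'b list) \<Rightarrow> bool" where
  "nonerasing f \<longleftrightarrow> (\<forall>c. f c \<noteq> [])"

lemma ml_length: "nonerasing f \<Longrightarrow> length xs \<le> length (morph_list f xs)"
proof (induction xs)
  case Nil then show ?case by simp
next
  case (Cons x xs)
  have "f x \<noteq> []" using Cons.prems by (simp add: nonerasing_def)
  hence "length (f x) \<ge> 1" by (cases "f x") auto
  moreover have "length (morph_list f (x # xs)) = length (f x) + length (morph_list f xs)" by simp
  ultimately show ?case using Cons.IH Cons.prems by simp
qed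

definition pl :: "('a \<Rightarrow> 'b list) \<Rightarrow> 'a infword \<Rightarrow> nat \<Rightarrow> nat" where
  "pl f w n = length (morph_list f (map w [0..<n]))"

lemma pl_Suc: "pl f w (Suc n) = pl f w n + length (f (w n))" by (simp add: pl_def upt_Suc_append)
lemma pl_0[simp]: "pl f w 0 = 0" by (simp add: pl_def)

lemma L1: assumes ne: "nonerasing f" and k: "k < pl f w n"
  shows "morph_inf f w k = morph_list f (map w [0..<n]) ! k"
proof -
  let ?N = "n + Suc k"
  have e1: "map w [0..<?N] = map w [0..<n] @ map w [n..<?N]"
    by (simp only: upt_add_eq_append[OF le0] map_append)
  have nn: "n + Suc k = Suc k + n" by (rule add.commute)
  have e2: "map w [0..<?N] = map w [0..<Suc k] @ map w [Suc k..<?N]"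
    by (simp only: nn upt_add_eq_append[OF le0] map_append)
  have lk: "Suc k \<le> length (morph_list f (map w [0..<Suc k]))"
    using ml_length[OF ne, of "map w [0..<Suc k]"] by simp
  have "morph_list f (map w [0..<?N]) ! k = (morph_list f (map w [0..<n]) @ morph_list f (map w [n..<?N])) ! k"
    by (simp only: e1 ml_append)
  also have "\<dots> = morph_list f (map w [0..<n]) ! k" using k by (simp add: nth_append pl_def)
  finally have 1: "morph_list f (map w [0..<?N]) ! k = morph_list f (map w [0..<n]) ! k" .
  have "morph_list f (map w [0..<?N]) ! k = (morph_list f (map w [0..<Suc k]) @ morph_list f (map w [Suc k..<?N])) ! k"
    by (simp only: e2 ml_append)
  also have "\<dots> = morph_list f (map w [0..<Suc k]) ! k" using lk by (simp add: nth_append)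
  finally show ?thesis using 1 by (simp add: morph_inf_def)
qed

lemma P2: assumes ne: "nonerasing f" and p: "prefix_inf v w"
  shows "prefix_inf (morph_list f v) (morph_inf f w)"
proof -
  have v: "v = map w [0..<length v]" using p by (simp add: prefix_inf_def)
  show ?thesis unfolding prefix_inf_nth
  proof (intro allI impI)
    fix k assume kk: "k < length (morph_list f v)"
    have "k < pl f w (length v)" using kk v by (metis pl_def)
    hence "morph_inf f w k = morph_list f (map w [0..<length v]) ! k" by (rule L1[OF ne])
    thus "morph_list f v ! k = morph_inf f w k" by (simp only: v[symmetric])
  qed
qed

lemma L2: assumes ne: "nonerasing f"
  shows "morph_inf f (shft w n) k = morph_inf f w (pl f w n + k)"
proof -
  have e0: "map w [n..<n + Suc k] = map (shft w n) [0..<Suc k]"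
    by (rule nth_equalityI) auto
  have e: "map w [0..<n + Suc k] = map w [0..<n] @ map (shft w n) [0..<Suc k]"
    by (simp only: upt_add_eq_append[OF le0] map_append e0)
  have lk: "Suc k \<le> length (morph_list f (map (shft w n) [0..<Suc k]))"
    using ml_length[OF ne, of "map (shft w n) [0..<Suc k]"] by simp
  have "pl f w n + k < pl f w (n + Suc k)" using lk unfolding pl_def by (simp only: e ml_append) simp
  hence "morph_inf f w (pl f w n + k) = morph_list f (map w [0..<n + Suc k]) ! (pl f w n + k)"
    by (rule L1[OF ne])
  also have "\<dots> = (morph_list f (map w [0..<n]) @ morph_list f (map (shft w n) [0..<Suc k])) ! (pl f w n + k)"
    by (simp only: e ml_append)
  also have "\<dots> = morph_list f (map (shft w n) [0..<Suc k]) ! k" by (simp add: nth_append pl_def)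
  also have "\<dots> = morph_inf f (shft w n) k" by (simp add: morph_inf_def)
  finally show ?thesis by simp
qed

lemma shft_morph: "nonerasing f \<Longrightarrow> shft (morph_inf f w) (pl f w n) = morph_inf f (shft w n)"
  by (rule ext) (simp add: L2)

lemma block: assumes ne: "nonerasing f" and j: "j < length (f (w n))"
  shows "morph_inf f w (pl f w n + j) = f (w n) ! j"
proof -
  have "pl f w n + j < pl f w (Suc n)" using j by (simp add: pl_Suc)
  hence "morph_inf f w (pl f w n + j) = morph_list f (map w [0..<Suc n]) ! (pl f w n + j)"
    by (rule L1[OF ne])
  also have "\<dots> = f (w n) ! j" by (simp add: nth_append pl_def upt_Suc_append)
  finally show ?thesis .
qed

lemma pl_less: "nonerasing f \<Longrightarrow> pl f w n < pl f w (Suc n)"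
  by (auto simp: pl_Suc nonerasing_def)

lemma locate: assumes ne: "nonerasing f" shows "\<exists>n. pl f w n \<le> i \<and> i < pl f w (Suc n)"
proof (induction i)
  case 0 show ?case using pl_less[OF ne, of w 0] by (intro exI[of _ 0]) simp
next
  case (Suc i)
  then obtain n where n: "pl f w n \<le> i" "i < pl f w (Suc n)" by blast
  show ?case
  proof (cases "Suc i < pl f w (Suc n)")
    case True then show ?thesis using n by (intro exI[of _ n]) simp
  next
    case False then show ?thesis using n pl_less[OF ne, of w "Suc n"] by (intro exI[of _ "Suc n"]) simp
  qed
qed



lemma tauA_simps[simp]: "tau_a A = [A]" "tau_a B = [A, B]" by (simp_all add: tau_a_def)
lemma ne_a: "nonerasing tau_a" by (auto simp: nonerasing_def tau_a_def split: ab.splits)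

lemma TA_start: "morph_inf tau_a W (pl tau_a W n) = A"
  using block[OF ne_a, of 0 W n] by (cases "W n") auto

lemma TA_B2: "W n = B \<Longrightarrow> morph_inf tau_a W (pl tau_a W n + 1) = B"
  using block[OF ne_a, of 1 W n] by auto

lemma TA_0: "morph_inf tau_a W 0 = A" using TA_start[of W 0] by simp

lemma pl1A: "W 0 = A \<Longrightarrow> pl tau_a W 1 = 1" using pl_Suc[of tau_a W 0] by simp
lemma pl1B: "W 0 = B \<Longrightarrow> pl tau_a W 1 = 2" using pl_Suc[of tau_a W 0] by simp

lemma TA_last: "morph_inf tau_a W (pl tau_a W (Suc n) - 1) = W n"
proof (cases "W n")
  case A
  then show ?thesis using TA_start[of W n] by (simp add: pl_Suc)
next
  case B
  then show ?thesis using TA_B2[of W n] by (simp add: pl_Suc)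
qed

lemma TA_posB: assumes "morph_inf tau_a W i = B"
  shows "\<exists>n. W n = B \<and> Suc i = pl tau_a W (Suc n)"
proof -
  obtain n where n: "pl tau_a W n \<le> i" "i < pl tau_a W (Suc n)" using locate[OF ne_a] by blast
  show ?thesis
  proof (cases "W n")
    case A
    then have "i = pl tau_a W n" using n by (simp add: pl_Suc)
    then show ?thesis using assms TA_start[of W n] by simp
  next
    case B
    then have "i = pl tau_a W n \<or> i = pl tau_a W n + 1" using n by (auto simp: pl_Suc)
    then show ?thesis using assms TA_start[of W n] B by (auto simp: pl_Suc)
  qed
qed

lemma TA_posAA: assumes "morph_inf tau_a W j = A" "morph_inf tau_a W (Suc j) = A"
  shows "\<exists>m. W m = A \<and> Suc j = pl tau_a W (Suc m)"
proof -
  obtain n where n: "pl tau_a W n \<le> j" "j < pl tau_a W (Suc n)" using locate[OF ne_a] by blast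
  show ?thesis
  proof (cases "W n")
    case A
    then have "j = pl tau_a W n" using n by (simp add: pl_Suc)
    then show ?thesis using A by (intro exI[of _ n]) (simp add: pl_Suc)
  next
    case B
    then have "j = pl tau_a W n \<or> j = pl tau_a W n + 1" using n by (auto simp: pl_Suc)
    then show ?thesis using assms TA_B2[of W n] B by auto
  qed
qed

lemma shftA1: "W 0 = A \<Longrightarrow> shft (morph_inf tau_a W) 1 = morph_inf tau_a (shft W 1)"
  using shft_morph[OF ne_a, of W 1] pl1A by simp
lemma shftB2: "W 0 = B \<Longrightarrow> shft (morph_inf tau_a W) 2 = morph_inf tau_a (shft W 1)"
  using shft_morph[OF ne_a, of W 1] pl1B by simp

lemma EX: "prefix_inf u (morph_inf tau_a W) \<Longrightarrow>
  \<exists>v r. u = morph_list tau_a v @ r \<and> prefix_inf v W \<and> (r = [] \<or> r = [A]) \<and> (r = [] \<longrightarrow> v = [] \<or> last v = B)"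
proof (induction "length u" arbitrary: u W rule: less_induct)
  case less
  show ?case
  proof (cases u)
    case Nil thus ?thesis by (intro exI[of _ "[]"]) simp
  next
    case (Cons x u1)
    have x: "x = A" using less.prems Cons TA_0[of W] by (simp add: prefix_Cons)
    have p1: "prefix_inf u1 (shft (morph_inf tau_a W) 1)" using less.prems Cons by (simp add: prefix_Cons)
    show ?thesis
    proof (cases "W 0")
      case A
      show ?thesis
      proof (cases "u1 = []")
        case True then show ?thesis using Cons x by (intro exI[of _ "[]"] exI[of _ "[A]"]) simp
      next
        case False
        have p1': "prefix_inf u1 (morph_inf tau_a (shft W 1))" using p1 shftA1[of W, OF A] by simp
        obtain v r where IH: "u1 = morph_list tau_a v @ r" "prefix_inf v (shft W 1)" "r=[] \<or> r=[A]"
            "r=[] \<longrightarrow> v=[] \<or> last v = B"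
          using less.hyps[of u1 "shft W 1"] Cons p1' by auto
        have "v \<noteq> [] \<or> r \<noteq> []" using False IH(1) by auto
        then show ?thesis using IH Cons x A
          by (intro exI[of _ "A # v"] exI[of _ r]) (auto simp: prefix_Cons)
      qed
    next
      case B
      have w1: "morph_inf tau_a W 1 = B" using TA_B2[of W 0] B by simp
      show ?thesis
      proof (cases u1)
        case Nil then show ?thesis using Cons x by (intro exI[of _ "[]"] exI[of _ "[A]"]) simp
      next
        case (Cons y u2)
        have y: "y = B" using p1 Cons w1 by (simp add: prefix_Cons)
        have "prefix_inf u2 (shft (shft (morph_inf tau_a W) 1) 1)" using p1 unfolding Cons prefix_Cons by blast
        then have "prefix_inf u2 (shft (morph_inf tau_a W) 2)" by (simp only: shft_shft one_add_one)
        then have p2: "prefix_inf u2 (morph_inf tau_a (shft W 1))" unfolding shftB2[of W, OF B] .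
        obtain v r where IH: "u2 = morph_list tau_a v @ r" "prefix_inf v (shft W 1)" "r=[] \<or> r=[A]"
            "r=[] \<longrightarrow> v=[] \<or> last v = B"
          using less.hyps[of u2 "shft W 1"] Cons \<open>u = x # u1\<close> p2 by auto
        then show ?thesis using \<open>u = x # u1\<close> Cons x y B
          by (intro exI[of _ "B # v"] exI[of _ r]) (auto simp: prefix_Cons)
      qed
    qed
  qed
qed

lemma LEN: assumes "u = morph_list tau_a v @ r" "r = [] \<or> r = [A]" "r = [] \<longrightarrow> v = [] \<or> last v = B" "u \<noteq> []"
  shows "length v < length u"
proof -
  have ml: "length v \<le> length (morph_list tau_a v)" for v by (rule ml_length[OF ne_a])
  show ?thesis
  proof (cases "r = []")
    case False then show ?thesis using assms ml[of v] by auto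
  next
    case True
    then have v: "v \<noteq> []" "last v = B" using assms by auto
    then have "v = butlast v @ [B]" by (metis append_butlast_last_id)
    then have "morph_list tau_a v = morph_list tau_a (butlast v) @ [A, B]" by (metis ml_append ml_Cons ml_Nil tauA_simps(2) append_Nil2)
    then show ?thesis using assms True ml[of "butlast v"] \<open>v \<noteq> []\<close> by simp
  qed
qed

lemma PA: "prefix_inf (morph_list tau_a v @ r) (morph_inf tau_a W) \<Longrightarrow> r = [A] \<or> (r = [] \<and> (v = [] \<or> last v = B)) \<Longrightarrow> prefix_inf v W"
proof (induction v arbitrary: W)
  case Nil then show ?case by simp
next
  case (Cons c v)
  show ?case
  proof (cases c)
    case A
    have ne: "morph_list tau_a v @ r \<noteq> [] \<and> hd (morph_list tau_a v @ r) = A"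
    proof (cases v)
      case Nil then show ?thesis using Cons.prems A by auto
    next
      case (Cons d v') then show ?thesis by (cases d) auto
    qed
    have p: "prefix_inf (morph_list tau_a v @ r) (shft (morph_inf tau_a W) 1)"
      using Cons.prems A by (simp add: prefix_Cons)
    have w1: "morph_inf tau_a W 1 = A" using p ne
      by (cases "morph_list tau_a v @ r") (auto simp: prefix_Cons)
    have W0: "W 0 = A"
    proof (rule ccontr)
      assume "W 0 \<noteq> A" then have "W 0 = B" by (cases "W 0") auto
      then show False using TA_B2[of W 0] w1 by simp
    qed
    have p': "prefix_inf (morph_list tau_a v @ r) (morph_inf tau_a (shft W 1))"
      using p unfolding shftA1[of W, OF W0] .
    have c': "r = [A] \<or> (r = [] \<and> (v = [] \<or> last v = B))" using Cons.prems(2) A by (auto split: if_splits)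
    have "prefix_inf v (shft W 1)" by (rule Cons.IH[OF p' c'])
    then show ?thesis using W0 A by (simp add: prefix_Cons)
  next
    case B
    have p: "prefix_inf (morph_list tau_a v @ r) (shft (morph_inf tau_a W) 2)"
      and w1: "morph_inf tau_a W 1 = B"
      using Cons.prems B by (simp_all add: prefix_Cons numeral_2_eq_2)
    have W0: "W 0 = B"
    proof (rule ccontr)
      assume "W 0 \<noteq> B" then have "W 0 = A" by (cases "W 0") auto
      then show False using TA_start[of W 1] pl1A w1 by simp
    qed
    have p': "prefix_inf (morph_list tau_a v @ r) (morph_inf tau_a (shft W 1))"
      using p unfolding shftB2[of W, OF W0] .
    have c': "r = [A] \<or> (r = [] \<and> (v = [] \<or> last v = B))" using Cons.prems(2) B by (auto split: if_splits)
    have "prefix_inf v (shft W 1)" by (rule Cons.IH[OF p' c'])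
    then show ?thesis using W0 B by (simp add: prefix_Cons)
  qed
qed



lemma DS_a: assumes ls: "left_special u (morph_inf tau_a W)" and une: "u \<noteq> []"
  shows "\<exists>v. length v < length u \<and> left_special v W \<and> (prefix_inf v W \<longrightarrow> prefix_inf u (morph_inf tau_a W))"
proof -
  let ?w = "morph_inf tau_a W"
  obtain i where i: "?w i = B" "prefix_inf u (shft ?w (Suc i))" using ls by (auto simp: LS_iff factor_Cons)
  obtain j where j: "?w j = A" "prefix_inf u (shft ?w (Suc j))" using ls by (auto simp: LS_iff factor_Cons)
  obtain n where n: "W n = B" "Suc i = pl tau_a W (Suc n)" using TA_posB[OF i(1)] by blast
  have p1: "prefix_inf u (morph_inf tau_a (shft W (Suc n)))" using i(2) n shft_morph[OF ne_a, of W "Suc n"] by simp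
  obtain a u' where u: "u = a # u'" using une by (cases u) auto
  have a: "a = A" using i(2) n u TA_start[of W "Suc n"] by (simp add: prefix_Cons)
  have wj: "?w (Suc j) = A" using j(2) u a by (simp add: prefix_Cons)
  obtain m where m: "W m = A" "Suc j = pl tau_a W (Suc m)" using TA_posAA[OF j(1) wj] by blast
  have p2: "prefix_inf u (morph_inf tau_a (shft W (Suc m)))" using j(2) m shft_morph[OF ne_a, of W "Suc m"] by simp
  obtain v r where vr: "u = morph_list tau_a v @ r" "prefix_inf v (shft W (Suc n))" "r = [] \<or> r = [A]"
    "r = [] \<longrightarrow> v = [] \<or> last v = B" using EX[OF p1] by blast
  have len: "length v < length u" using LEN[OF vr(1) vr(3) vr(4) une] .
  have pv2: "prefix_inf v (shft W (Suc m))"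
    using PA[of v r "shft W (Suc m)"] p2 vr by auto
  have lsv: "left_special v W" unfolding LS_iff factor_Cons using n pv2 m vr(2) by blast
  have "prefix_inf u ?w" if pv: "prefix_inf v W"
  proof -
    have pm: "prefix_inf (morph_list tau_a v) ?w" by (rule P2[OF ne_a pv])
    have vv: "v = map W [0..<length v]" using pv by (simp add: prefix_inf_def)
    have lml: "length (morph_list tau_a v) = pl tau_a W (length v)" using vv by (metis pl_def)
    have "prefix_inf r (shft ?w (length (morph_list tau_a v)))"
      using vr(3) lml TA_start[of W "length v"] by (auto simp: prefix_Cons)
    then show ?thesis using pm vr(1) by (simp add: prefix_append)
  qed
  then show ?thesis using len lsv by blast
qed

lemma BA: assumes pv: "prefix_inf v W" shows "prefix_inf (morph_list tau_a v @ [A]) (morph_inf tau_a W)"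
proof -
  have pm: "prefix_inf (morph_list tau_a v) (morph_inf tau_a W)" by (rule P2[OF ne_a pv])
  have vv: "v = map W [0..<length v]" using pv by (simp add: prefix_inf_def)
  have lml: "length (morph_list tau_a v) = pl tau_a W (length v)" using vv by (metis pl_def)
  show ?thesis using pm lml TA_start[of W "length v"] by (simp add: prefix_append prefix_Cons)
qed

lemma FA: assumes "factor (c # v) W" shows "factor (c # morph_list tau_a v @ [A]) (morph_inf tau_a W)"
proof -
  obtain n where n: "W n = c" "prefix_inf v (shft W (Suc n))" using assms by (auto simp: factor_Cons)
  have p: "prefix_inf (morph_list tau_a v @ [A]) (shft (morph_inf tau_a W) (pl tau_a W (Suc n)))"
    using BA[OF n(2)] shft_morph[OF ne_a, of W "Suc n"] by simp
  have pos: "pl tau_a W (Suc n) > 0" using pl_less[OF ne_a, of W n] by simp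
  have "morph_inf tau_a W (pl tau_a W (Suc n) - 1) = c" using TA_last[of W n] n by simp
  then show ?thesis unfolding factor_Cons using p pos
    by (intro exI[of _ "pl tau_a W (Suc n) - 1"]) simp
qed

lemma ivt: "w 0 = A \<Longrightarrow> w i = B \<Longrightarrow> \<exists>k. w k = A \<and> w (Suc k) = B"
proof (induction i)
  case 0 then show ?case by simp
next
  case (Suc i) then show ?case by (cases "w i") auto
qed

lemma noBB: assumes "LSP w" "w 0 = A" "w i = B" shows "w (Suc i) = A"
proof (rule ccontr)
  assume "w (Suc i) \<noteq> A"
  then have b: "w (Suc i) = B" by (cases "w (Suc i)") auto
  obtain k where k: "w k = A" "w (Suc k) = B" using ivt[of w i] assms by blast
  have "left_special [B] w" unfolding LS_iff factor_Cons
    using k b assms(3) by (auto simp: prefix_Cons)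
  then have "prefix_inf [B] w" using assms(1) by (simp add: LSP_def)
  then show False using assms(2) by (simp add: prefix_Cons)
qed

lemma ASC_a: assumes L: "LSP w" and w0: "w 0 = A"
  shows "\<exists>W. w = morph_inf tau_a W \<and> LSP W"
proof -
  define nx where "nx i = (if w (Suc i) = B then Suc (Suc i) else Suc i)" for i
  define p where "p n = (nx ^^ n) 0" for n
  define W where "W n = (if w (Suc (p n)) = B then B else A)" for n
  have pS: "p (Suc n) = nx (p n)" for n by (simp add: p_def)
  have pA: "w (p n) = A" for n
  proof (induction n)
    case 0 then show ?case using w0 by (simp add: p_def)
  next
    case (Suc n) then show ?case using noBB[OF L w0, of "Suc (p n)"]
      by (cases "w (Suc (p n))") (auto simp: pS nx_def)
  qed
  have mlp: "morph_list tau_a (map W [0..<n]) = map w [0..<p n]" for n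
  proof (induction n)
    case 0 then show ?case by (simp add: p_def)
  next
    case (Suc n)
    show ?case
    proof (cases "w (Suc (p n)) = B")
      case True
      then show ?thesis using Suc pA[of n] by (simp add: pS nx_def W_def upt_Suc_append)
    next
      case False
      then show ?thesis using Suc pA[of n] by (simp add: pS nx_def W_def upt_Suc_append)
    qed
  qed
  have pge: "n \<le> p n" for n
    by (induction n) (auto simp: pS nx_def)
  have eq: "w = morph_inf tau_a W"
  proof
    fix k
    have "morph_inf tau_a W k = map w [0..<p (Suc k)] ! k" by (simp add: morph_inf_def mlp)
    also have "\<dots> = w k" using pge[of "Suc k"] by simp
    finally show "w k = morph_inf tau_a W k" by simp
  qed
  have "LSP W" unfolding LSP_def
  proof (intro allI impI)
    fix v assume "left_special v W"
    then have "left_special (morph_list tau_a v @ [A]) w" unfolding LS_iff using FA eq by metis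
    then have "prefix_inf (morph_list tau_a v @ [A]) (morph_inf tau_a W)" using L eq by (simp add: LSP_def)
    then show "prefix_inf v W" using PA by blast
  qed
  then show ?thesis using eq by blast
qed



fun E :: "ab \<Rightarrow> ab" where "E A = B" | "E B = A"

lemma EE[simp]: "E (E x) = x" by (cases x) auto
lemma E_eq[simp]: "E x = E y \<longleftrightarrow> x = y" by (cases x; cases y) auto
lemma EcE[simp]: "E \<circ> E = id" by (rule ext) simp
lemma mapEE[simp]: "map E (map E u) = u" by (induction u) auto
lemma EEw[simp]: "E \<circ> (E \<circ> w) = w" by (rule ext) simp

lemma ne_b: "nonerasing tau_b" by (auto simp: nonerasing_def tau_b_def split: ab.splits)

lemma tau_b_E: "tau_b c = map E (tau_a (E c))" by (cases c) (auto simp: tau_b_def)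

lemma ml_b: "morph_list tau_b xs = map E (morph_list tau_a (map E xs))"
  by (induction xs) (auto simp: tau_b_E)

lemma mi_b: "morph_inf tau_b w = E \<circ> morph_inf tau_a (E \<circ> w)"
proof
  fix k
  have l: "Suc k \<le> length (morph_list tau_a (map (E \<circ> w) [0..<Suc k]))"
    using ml_length[OF ne_a, of "map (E \<circ> w) [0..<Suc k]"] by simp
  show "morph_inf tau_b w k = (E \<circ> morph_inf tau_a (E \<circ> w)) k"
    unfolding morph_inf_def ml_b using l by (simp add: map_map)
qed

lemma prefix_E: "prefix_inf (map E u) (E \<circ> w) \<longleftrightarrow> prefix_inf u w"
  by (simp add: prefix_inf_nth)
lemma prefix_E': "prefix_inf u (E \<circ> w) \<longleftrightarrow> prefix_inf (map E u) w"
  using prefix_E[of "map E u" w] by simp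

lemma shft_E: "shft (E \<circ> w) i = E \<circ> shft w i" by (rule ext) simp

lemma factor_E: "factor (map E u) (E \<circ> w) \<longleftrightarrow> factor u w"
  by (simp add: factor_shft shft_E prefix_E)

lemma LS_E: "left_special (map E u) (E \<circ> w) \<longleftrightarrow> left_special u w"
proof -
  have 1: "A # map E u = map E (B # u)" "B # map E u = map E (A # u)" by simp_all
  show ?thesis unfolding LS_iff 1 factor_E by blast
qed
lemma LS_E': "left_special u (E \<circ> w) \<longleftrightarrow> left_special (map E u) w"
  using LS_E[of "map E u" w] by simp

lemma LSP_E: "LSP (E \<circ> w) \<longleftrightarrow> LSP w"
  unfolding LSP_def
proof (intro iffI allI impI)
  fix u assume H: "\<forall>u. left_special u (E \<circ> w) \<longrightarrow> prefix_inf u (E \<circ> w)" and "left_special u w"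
  then have "left_special (map E u) (E \<circ> w)" by (simp add: LS_E)
  then show "prefix_inf u w" using H prefix_E by blast
next
  fix u assume H: "\<forall>u. left_special u w \<longrightarrow> prefix_inf u w" and "left_special u (E \<circ> w)"
  then have "left_special (map E u) w" by (simp add: LS_E')
  then show "prefix_inf u (E \<circ> w)" using H prefix_E' by blast
qed

lemma DS_b: assumes ls: "left_special u (morph_inf tau_b W)" and une: "u \<noteq> []"
  shows "\<exists>v. length v < length u \<and> left_special v W \<and> (prefix_inf v W \<longrightarrow> prefix_inf u (morph_inf tau_b W))"
proof -
  have "left_special (map E u) (morph_inf tau_a (E \<circ> W))" using ls by (simp add: mi_b LS_E')
  then obtain v where v: "length v < length (map E u)" "left_special v (E \<circ> W)"
    "prefix_inf v (E \<circ> W) \<longrightarrow> prefix_inf (map E u) (morph_inf tau_a (E \<circ> W))"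
    using DS_a une by blast
  show ?thesis
    apply (rule exI[of _ "map E v"])
    using v by (simp add: mi_b LS_E' prefix_E')
qed

lemma DS: assumes "f \<in> {tau_a, tau_b}" "left_special u (morph_inf f W)" "u \<noteq> []"
  shows "\<exists>v. length v < length u \<and> left_special v W \<and> (prefix_inf v W \<longrightarrow> prefix_inf u (morph_inf f W))"
  using assms DS_a DS_b by blast

lemma ASC: assumes L: "LSP w" shows "\<exists>f W. f \<in> {tau_a, tau_b} \<and> w = morph_inf f W \<and> LSP W"
proof (cases "w 0")
  case A then show ?thesis using ASC_a[OF L] by blast
next
  case B
  have "LSP (E \<circ> w)" "(E \<circ> w) 0 = A" using L B by (simp_all add: LSP_E)
  then obtain W where W: "E \<circ> w = morph_inf tau_a W" "LSP W" using ASC_a by blast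
  have "morph_inf tau_b (E \<circ> W) = w" using W(1)[symmetric] by (simp add: mi_b)
  moreover have "LSP (E \<circ> W)" using W(2) by (simp add: LSP_E)
  ultimately show ?thesis by (intro exI[of _ tau_b] exI[of _ "E \<circ> W"]) simp
qed

lemma adic_LSP_aux:
  assumes fs: "\<forall>n\<ge>1. fs n \<in> {tau_a, tau_b}"
    and ws: "\<forall>n\<ge>1. ws n = morph_inf (fs n) (ws (Suc n))"
  shows "m \<ge> 1 \<Longrightarrow> left_special u (ws m) \<Longrightarrow> prefix_inf u (ws m)"
proof (induction "length u" arbitrary: u m rule: less_induct)
  case less
  show ?case
  proof (cases "u = []")
    case True then show ?thesis by simp
  next
    case False
    have e: "ws m = morph_inf (fs m) (ws (Suc m))" using ws less.prems(1) by blast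
    have ls: "left_special u (morph_inf (fs m) (ws (Suc m)))" using less.prems(2) unfolding e .
    obtain v where v: "length v < length u" "left_special v (ws (Suc m))"
      "prefix_inf v (ws (Suc m)) \<longrightarrow> prefix_inf u (morph_inf (fs m) (ws (Suc m)))"
      using DS[OF _ ls False] fs less.prems by blast
    have "prefix_inf v (ws (Suc m))" using less.hyps[OF v(1), of "Suc m"] v(2) by simp
    then have "prefix_inf u (morph_inf (fs m) (ws (Suc m)))" using v(3) by blast
    then show ?thesis unfolding e .
  qed
qed

theorem proposition2:
  shows "(\<forall>(w :: ab infword) f. LSP w \<and> f \<in> {tau_a, tau_b} \<longrightarrow> LSP (morph_inf f w))
       \<and> (\<forall>w :: ab infword. LSP w \<longleftrightarrow> S_adic {tau_a, tau_b} w)"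
proof (intro conjI allI impI)
  fix w :: "ab infword" and f assume H: "LSP w \<and> f \<in> {tau_a, tau_b}"
  show "LSP (morph_inf f w)" unfolding LSP_def
  proof (intro allI impI)
    fix u assume ls: "left_special u (morph_inf f w)"
    show "prefix_inf u (morph_inf f w)"
    proof (cases "u = []")
      case True then show ?thesis by simp
    next
      case False
      then obtain v where "left_special v w" "prefix_inf v w \<longrightarrow> prefix_inf u (morph_inf f w)"
        using DS[OF _ ls] H by blast
      then show ?thesis using H by (simp add: LSP_def)
    qed
  qed
next
  fix w :: "ab infword"
  show "LSP w \<longleftrightarrow> S_adic {tau_a, tau_b} w"
  proof
    assume L: "LSP w"
    define S :: "(ab \<Rightarrow> ab list) set" where "S = {tau_a, tau_b}"
    define g where "g x = (SOME q. fst q \<in> S \<and> x = morph_inf (fst q) (snd q) \<and> LSP (snd q))" for x :: "ab infword"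
    have gp: "fst (g x) \<in> S \<and> x = morph_inf (fst (g x)) (snd (g x)) \<and> LSP (snd (g x))" if Lx: "LSP x" for x
    proof -
      obtain f W where "f \<in> S" "x = morph_inf f W" "LSP W" using ASC[OF Lx] unfolding S_def by blast
      then have "\<exists>q. fst q \<in> S \<and> x = morph_inf (fst q) (snd q) \<and> LSP (snd q)" by (intro exI[of _ "(f, W)"]) simp
      then show ?thesis unfolding g_def by (rule someI_ex)
    qed
    define sq where "sq n = ((snd \<circ> g) ^^ n) w" for n
    have sqS: "sq (Suc n) = snd (g (sq n))" for n by (simp add: sq_def)
    have sqL: "LSP (sq n)" for n
      by (induction n) (auto simp: sqS gp sq_def[of 0] L)
    show "S_adic {tau_a, tau_b} w" unfolding S_adic_def
    proof (intro exI[of _ "\<lambda>n. fst (g (sq (n - 1)))"] exI[of _ "\<lambda>n. sq (n - 1)"] conjI allI impI)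
      fix n :: nat assume "n \<ge> 1"
      then show "fst (g (sq (n - 1))) \<in> {tau_a, tau_b}" using gp[OF sqL] S_def by simp
    next
      show "sq (1 - 1) = w" by (simp add: sq_def)
    next
      fix n :: nat assume n: "n \<ge> 1"
      then obtain k where k: "n = Suc k" by (cases n) auto
      show "sq (n - 1) = morph_inf (fst (g (sq (n - 1)))) (sq (Suc n - 1))"
        using gp[OF sqL[of k]] k by (simp add: sqS)
    qed
  next
    assume "S_adic {tau_a, tau_b} w"
    then obtain fs ws where fs: "\<forall>n\<ge>1. fs n \<in> {tau_a, tau_b}" and w1: "ws 1 = w"
      and ws: "\<forall>n\<ge>1. ws n = morph_inf (fs n) (ws (Suc n))" unfolding S_adic_def by blast
    show "LSP w" unfolding LSP_def using adic_LSP_aux[OF fs ws, of 1] w1 by simp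
  qed
qed


end
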